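(* Let $\mathsf K\in\{\mathsf O,\mathsf{Sp}\}$ and $z\in I_n$. Then $MX^{\mathsf K}_z=\{A\in\mathsf{Mat}^{\mathsf K}_n:\operatorname{rank}(A_{[i][j]})\le\operatorname{rank}(z_{[i][j]})\text{ for all }(i,j)\in\operatorname{Ess}(D^{\mathsf O}(z))\}.$ Moreover, if $n$ is even and $z\in I^{\mathsf{FPF}}_n$ then $MX^{\mathsf{Sp}}_z=\{A\in\mathsf{Mat}^{\mathsf{Sp}}_n:\operatorname{rank}(A_{[i][j]})\le\operatorname{rank}(z_{[i][j]})\text{ for all }(i,j)\in\operatorname{Ess}(D^{\mathsf{Sp}}(z))\}.$
   Context: $I_n$ (resp. $I^{\mathsf{FPF}}_n$) is the set of involutions (resp. fixed-point-free involutions) in $S_n$; $z$ is identified with its permutation matrix with $1$'s at $(i,z(i))$; $A_{[i][j]}$ is the upper-left $i\times j$ submatrix. $\mathsf{Mat}^{\mathsf O}_n$ (resp. $\mathsf{Mat}^{\mathsf{Sp}}_n$) is the space of complex symmetric (resp. skew-symmetric) $n\times n$ matrices, and $MX^{\mathsf K}_z=\{A\in\mathsf{Mat}^{\mathsf K}_n:\operatorname{rank}(A_{[i][j]})\le\operatorname{rank}(z_{[i][j]})\ \forall i,j\in[n]\}$. The orthogonal Rothe diagram is $D^{\mathsf O}(z)=\{(i,z(j)):(i,j)\in[n]^2,\ z(i)>z(j)\le i<j\}$ and the symplectic Rothe diagram is $D^{\mathsf{Sp}}(z)=\{(i,z(j)):(i,j)\in[n]^2,\ z(i)>z(j)<i<j\}$.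 For $D\subseteq\mathbb{P}\times\mathbb{P}$, $\operatorname{Ess}(D)=\{(i,j)\in D:(i,j+1)\notin D,\ (i+1,j)\notin D\}$. *)

theory Defs
  imports "Jordan_Normal_Form.DL_Rank" "Jordan_Normal_Form.DL_Submatrix"
begin

text \<open>Indices follow the paper: [n] = {1..n}. A permutation z of [n] is a function
  nat => nat that permutes {1..n} (and is the identity elsewhere). Matrices are
  Jordan_Normal_Form matrices whose (0-based) entry (a,b) is the paper's entry (a+1,b+1).\<close>

definition involutions :: "nat \<Rightarrow> (nat \<Rightarrow> nat) set" where
  "involutions n = {z. z permutes {1..n} \<and> (\<forall>i. z (z i) = i)}"

definition fpf_involutions :: "nat \<Rightarrow> (nat \<Rightarrow> nat) set" where
  "fpf_involutions n = {z \<in> involutions n. \<forall>i\<in>{1..n}. z i \<noteq> i}"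

definition perm_mat :: "nat \<Rightarrow> (nat \<Rightarrow> nat) \<Rightarrow> complex mat" where
  "perm_mat n z = mat n n (\<lambda>(a,b). if z (a+1) = b+1 then 1 else 0)"

definition ul_sub :: "'a mat \<Rightarrow> nat \<Rightarrow> nat \<Rightarrow> 'a mat" where
  "ul_sub A i j = submatrix A {0..<i} {0..<j}"

definition crank :: "complex mat \<Rightarrow> nat" where
  "crank A = vec_space.rank (dim_row A) A"

datatype ktype = KO | KSp

definition Mat_K :: "ktype \<Rightarrow> nat \<Rightarrow> complex mat set" where
  "Mat_K K n = {A \<in> carrier_mat n n.
     (case K of KO \<Rightarrow> transpose_mat A = A | KSp \<Rightarrow> transpose_mat A = - A)}"

definition MX :: "ktype \<Rightarrow> nat \<Rightarrow> (nat \<Rightarrow> nat) \<Rightarrow> complex mat set" where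
  "MX K n z = {A \<in> Mat_K K n. \<forall>i\<in>{1..n}. \<forall>j\<in>{1..n}.
       crank (ul_sub A i j) \<le> crank (ul_sub (perm_mat n z) i j)}"

definition D_O :: "nat \<Rightarrow> (nat \<Rightarrow> nat) \<Rightarrow> (nat \<times> nat) set" where
  "D_O n z = {(i, z j) | i j. i \<in> {1..n} \<and> j \<in> {1..n} \<and> z i > z j \<and> z j \<le> i \<and> i < j}"

definition D_Sp :: "nat \<Rightarrow> (nat \<Rightarrow> nat) \<Rightarrow> (nat \<times> nat) set" where
  "D_Sp n z = {(i, z j) | i j. i \<in> {1..n} \<and> j \<in> {1..n} \<and> z i > z j \<and> z j < i \<and> i < j}"

definition Ess :: "(nat \<times> nat) set \<Rightarrow> (nat \<times> nat) set" where
  "Ess D = {(i,j) \<in> D. (i, j+1) \<notin> D \<and> (i+1, j) \<notin> D}"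

end

theory Submission
  imports Defs
begin
context vec_space begin

lemma lin_indpt_empty': "lin_indpt {}"
  by (metis empty_subsetI fin_dim finite_basis_exists subset_li_is_li vec_vs vectorspace.basis_def)

lemma basis_exists_cols:
  assumes A: "A \<in> carrier_mat n k"
  shows "\<exists>U. U \<subseteq> set (cols A) \<and> lin_indpt U \<and> set (cols A) \<subseteq> span U \<and> rank A = card U"
proof -
  obtain S where S: "finite S" "maximal S (\<lambda>T. T \<subseteq> set (cols A) \<and> lin_indpt T)"
    using maximal_exists_superset[of "set (cols A)" "(\<lambda>T. T \<subseteq> set (cols A) \<and> lin_indpt T)" "{}"]
      lin_indpt_empty' by auto
  have S1: "S \<subseteq> set (cols A)" "lin_indpt S" using S(2) unfolding maximal_def by auto
  have colsC: "set (cols A) \<subseteq> carrier_vec n" using A cols_dim by blast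
  have SC: "S \<subseteq> carrier_vec n" using S1 colsC by blast
  have sp: "set (cols A) \<subseteq> span S"
  proof
    fix c assume c: "c \<in> set (cols A)"
    show "c \<in> span S"
    proof (rule ccontr)
      assume nc: "c \<notin> span S"
      have cS: "c \<notin> S" using nc in_own_span[OF SC] by blast
      have "lin_indpt (S \<union> {c})"
        using lin_dep_iff_in_span[OF SC S1(2) _ cS] nc c colsC by auto
      then have "S \<union> {c} = S" using S(2) S1 c unfolding maximal_def by auto
      then show False using cS by auto
    qed
  qed
  show ?thesis using S1 sp rank_card_indpt[OF A S(2)] by blast
qed

lemma rank_le_card_gen:
  assumes A: "A \<in> carrier_mat n k" and T: "finite T" "T \<subseteq> carrier_vec n"
    and sp: "set (cols A) \<subseteq> span T"
  shows "rank A \<le> card T"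
proof -
  obtain U where U: "U \<subseteq> set (cols A)" "lin_indpt U" "rank A = card U"
    using basis_exists_cols[OF A] by blast
  have fU: "finite U" using U(1) finite_subset by blast
  have "U \<subseteq> span T" using U(1) sp by blast
  from replacement[OF fU T(1) _ U(2) this] T(2)
  have "int (card U) \<le> int (card T)" by auto
  then show ?thesis using U(3) by simp
qed

lemma card_le_rank:
  assumes A: "A \<in> carrier_mat n k" and U: "finite U" "U \<subseteq> span (set (cols A))" "lin_indpt U"
  shows "card U \<le> rank A"
proof -
  obtain S where S: "S \<subseteq> set (cols A)" "lin_indpt S" "set (cols A) \<subseteq> span S" "rank A = card S"
    using basis_exists_cols[OF A] by blast
  have colsC: "set (cols A) \<subseteq> carrier_vec n" using A cols_dim by blast
  have SC: "S \<subseteq> carrier_vec n" using S colsC by blast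
  have fS: "finite S" using S(1) finite_subset by blast
  have "span (set (cols A)) \<subseteq> span S" using span_subsetI[OF SC S(3)] .
  then have "U \<subseteq> span S" using U(2) by blast
  from replacement[OF U(1) fS SC U(3) this]
  have "int (card S) \<le> int (card S) - int (card U) + int (card S)" by auto
  then show ?thesis using S(4) by simp
qed

lemma rank_mono_span:
  assumes A: "A \<in> carrier_mat n k" and B: "B \<in> carrier_mat n l"
    and sp: "set (cols A) \<subseteq> span (set (cols B))"
  shows "rank A \<le> rank B"
proof -
  obtain U where U: "U \<subseteq> set (cols A)" "lin_indpt U" "rank A = card U"
    using basis_exists_cols[OF A] by blast
  have fU: "finite U" using U(1) finite_subset by blast
  show ?thesis using card_le_rank[OF B fU _ U(2)] U sp by auto
qed

lemma rank_insert_le: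
  assumes A: "A \<in> carrier_mat n k" and B: "B \<in> carrier_mat n l" and v: "v \<in> carrier_vec n"
    and sub: "set (cols B) \<subseteq> insert v (set (cols A))"
  shows "rank B \<le> rank A + 1"
proof -
  obtain U where U: "U \<subseteq> set (cols A)" "lin_indpt U" "set (cols A) \<subseteq> span U" "rank A = card U"
    using basis_exists_cols[OF A] by blast
  have colsC: "set (cols A) \<subseteq> carrier_vec n" using A cols_dim by blast
  have fU: "finite U" using U(1) finite_subset by blast
  have UC: "insert v U \<subseteq> carrier_vec n" using U(1) colsC v by blast
  have "span U \<subseteq> span (insert v U)" using span_is_monotone[of U "insert v U"] by blast
  moreover have "v \<in> span (insert v U)" using in_own_span[OF UC] by blast
  ultimately have "set (cols B) \<subseteq> span (insert v U)" using sub U(3) by blast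
  from rank_le_card_gen[OF B _ UC this] fU
  have "rank B \<le> card (insert v U)" by simp
  also have "\<dots> \<le> card U + 1" using fU by (simp add: card_insert_if)
  finally show ?thesis using U(4) by simp
qed

lemma rank_insert_ge:
  assumes A: "A \<in> carrier_mat n k" and B: "B \<in> carrier_mat n l"
    and sub: "set (cols A) \<subseteq> set (cols B)" and v: "v \<in> set (cols B)"
    and nv: "v \<notin> span (set (cols A))"
  shows "rank A + 1 \<le> rank B"
proof -
  obtain U where U: "U \<subseteq> set (cols A)" "lin_indpt U" "set (cols A) \<subseteq> span U" "rank A = card U"
    using basis_exists_cols[OF A] by blast
  have colsC: "set (cols A) \<subseteq> carrier_vec n" using A cols_dim by blast
  have colsB: "set (cols B) \<subseteq> carrier_vec n" using B cols_dim by blast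
  have fU: "finite U" using U(1) finite_subset by blast
  have UC: "U \<subseteq> carrier_vec n" using U(1) colsC by blast
  have "span U \<subseteq> span (set (cols A))" using span_is_monotone[OF U(1)] .
  then have nvU: "v \<notin> span U" using nv by blast
  have vU: "v \<notin> U" using nvU in_own_span[OF UC] by blast
  have li: "lin_indpt (U \<union> {v})"
    using lin_dep_iff_in_span[OF UC U(2) _ vU] nvU v colsB by auto
  have "U \<union> {v} \<subseteq> span (set (cols B))"
    using U(1) sub v in_own_span[OF colsB] by blast
  from card_le_rank[OF B _ this li] fU
  have "card (U \<union> {v}) \<le> rank B" by simp
  then show ?thesis using U(4) vU fU by simp
qed

lemma rank_mult_left_le:
  assumes B: "B \<in> carrier_mat n l" and Y: "Y \<in> carrier_mat l k"
  shows "rank (B * Y) \<le> rank B"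
proof -
  have BY: "B * Y \<in> carrier_mat n k" using B Y by simp
  have "set (cols (B * Y)) \<subseteq> span (set (cols B))"
  proof
    fix c assume "c \<in> set (cols (B * Y))"
    then obtain j where j: "j < k" "c = col (B * Y) j"
      using BY by (metis carrier_matD(2) cols_length cols_nth in_set_conv_nth)
    have "c = B *\<^sub>v col Y j" using j col_mult2[OF B Y] by simp
    moreover have "col Y j \<in> carrier_vec l" using Y j by auto
    ultimately have "c \<in> col_space B" using col_space_eq[OF B] B by auto
    then show "c \<in> span (set (cols B))" unfolding col_space_def .
  qed
  then show ?thesis using rank_mono_span[OF BY B] by simp
qed

lemma in_span_cols_iff:
  assumes B: "B \<in> carrier_mat n l" and v: "v \<in> carrier_vec n"
  shows "v \<in> span (set (cols B)) \<longleftrightarrow> (\<exists>x\<in>carrier_vec l. B *\<^sub>v x = v)"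
  using col_space_eq[OF B] B v unfolding col_space_def by auto

end

context vec_space begin
lemma rank_transpose_le:
  fixes A :: "'a mat"
  assumes A: "A \<in> carrier_mat n k"
  shows "vec_space.rank k (transpose_mat A) \<le> rank A"
proof -
  obtain U where U: "U \<subseteq> set (cols A)" "set (cols A) \<subseteq> span U"
     "rank A = card U"
    using basis_exists_cols[OF A] by blast
  have colsC: "set (cols A) \<subseteq> carrier_vec n" using A cols_dim by blast
  have fU: "finite U" using U(1) finite_subset by blast
  obtain us where us: "set us = U" "distinct us" using finite_distinct_list[OF fU] by blast
  define r where "r = length us"
  have cardU: "card U = r" using us distinct_card r_def by metis
  define C where "C = mat_of_cols n us"
  have usC: "set us \<subseteq> carrier_vec n" using us U(1) colsC by blast
  have C: "C \<in> carrier_mat n r" unfolding C_def r_def by simp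
  have colsCeq: "cols C = us" unfolding C_def using usC by simp
  have ex: "\<forall>j<k. \<exists>x\<in>carrier_vec r. C *\<^sub>v x = col A j"
  proof (intro allI impI)
    fix j assume j: "j < k"
    have cj: "col A j \<in> set (cols A)" using j A by (simp add: cols_def)
    then have "col A j \<in> span (set (cols C))" using U(2) us(1) colsCeq by auto
    moreover have "col A j \<in> carrier_vec n" using cj colsC by blast
    ultimately show "\<exists>x\<in>carrier_vec r. C *\<^sub>v x = col A j"
      using in_span_cols_iff[OF C] by blast
  qed
  define xf where "xf j = (SOME x. x \<in> carrier_vec r \<and> C *\<^sub>v x = col A j)" for j
  have xf: "xf j \<in> carrier_vec r \<and> C *\<^sub>v xf j = col A j" if "j < k" for j
    using someI_ex[OF ex[rule_format, OF that, unfolded Bex_def]] unfolding xf_def by blast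
  define R where "R = mat r k (\<lambda>(a,b). xf b $ a)"
  have R: "R \<in> carrier_mat r k" unfolding R_def by simp
  have colR: "col R j = xf j" if "j < k" for j
    using xf[OF that] that unfolding R_def by (intro eq_vecI) auto
  have ACR: "A = C * R"
  proof (rule eq_matI)
    show "dim_row A = dim_row (C * R)" "dim_col A = dim_col (C * R)" using A C R by auto
    fix i j assume i: "i < dim_row (C * R)" and j: "j < dim_col (C * R)"
    have i': "i < n" and j': "j < k" using i j C R by auto
    have "(C * R) $$ (i, j) = row C i \<bullet> col R j" using i j by simp
    also have "\<dots> = (C *\<^sub>v col R j) $ i" using i' C by simp
    also have "\<dots> = col A j $ i" using colR[OF j'] xf[OF j'] by simp
    also have "\<dots> = A $$ (i,j)" using A i' j' by simp
    finally show "A $$ (i, j) = (C * R) $$ (i, j)" by simp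
  qed
  have "transpose_mat A = transpose_mat R * transpose_mat C"
    using ACR transpose_mult[OF C R] by simp
  then have "vec_space.rank k (transpose_mat A) \<le> vec_space.rank k (transpose_mat R)"
    using vec_space.rank_mult_left_le[of "transpose_mat R" k r "transpose_mat C" n] R C by simp
  also have "\<dots> \<le> r" using vec_space.rank_le_nc[of "transpose_mat R" k r] R by simp
  finally show ?thesis using U(3) cardU by simp
qed
end

lemma rank_transpose:
  fixes A :: "'a::field mat"
  assumes A: "A \<in> carrier_mat m k"
  shows "vec_space.rank k (transpose_mat A) = vec_space.rank m A"
proof -
  have AT: "transpose_mat A \<in> carrier_mat k m" using A by simp
  have "vec_space.rank m (transpose_mat (transpose_mat A)) \<le> vec_space.rank k (transpose_mat A)"
    by (rule vec_space.rank_transpose_le[OF AT])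
  moreover have "vec_space.rank k (transpose_mat A) \<le> vec_space.rank m A"
    by (rule vec_space.rank_transpose_le[OF A])
  ultimately show ?thesis by simp
qed

lemma rank_uminus:
  fixes A :: "'a::field mat"
  assumes A: "A \<in> carrier_mat m k"
  shows "vec_space.rank m (- A) = vec_space.rank m A"
proof -
  have e1: "- A = A * (- (1\<^sub>m k))" using A by simp
  have e2: "A = (- A) * (- (1\<^sub>m k))" using A by simp
  have "vec_space.rank m (- A) \<le> vec_space.rank m A"
    using vec_space.rank_mult_left_le[OF A, of "- (1\<^sub>m k)" k] e1 by simp
  moreover have "vec_space.rank m A \<le> vec_space.rank m (- A)"
    using vec_space.rank_mult_left_le[of "- A" m k "- (1\<^sub>m k)" k] A e2 by simp
  ultimately show ?thesis by simp
qed

definition pm :: "'a mat \<Rightarrow> nat \<Rightarrow> nat \<Rightarrow> 'a mat" where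
  "pm A i j = mat i j (\<lambda>(a,b). A $$ (a,b))"

lemma pm_carrier[simp]: "pm A i j \<in> carrier_mat i j" "dim_row (pm A i j) = i" "dim_col (pm A i j) = j"
  unfolding pm_def by auto

lemma pm_index[simp]: "a < i \<Longrightarrow> b < j \<Longrightarrow> pm A i j $$ (a,b) = A $$ (a,b)"
  unfolding pm_def by auto

lemma pm_transpose:
  assumes "i \<le> dim_row A" "j \<le> dim_col A"
  shows "transpose_mat (pm A i j) = pm (transpose_mat A) j i"
  using assms by (intro eq_matI) auto

lemma pm_col_mono:
  fixes A :: "'a::field mat"
  assumes "j \<le> j'"
  shows "vec_space.rank i (pm A i j) \<le> vec_space.rank i (pm A i j')"
proof -
  define E :: "'a mat" where "E = mat j' j (\<lambda>(a,b). if a = b then 1 else 0)"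
  have E: "E \<in> carrier_mat j' j" unfolding E_def by simp
  have "pm A i j = pm A i j' * E"
  proof (rule eq_matI)
    fix a b assume a: "a < dim_row (pm A i j' * E)" and b: "b < dim_col (pm A i j' * E)"
    have a': "a < i" and b': "b < j" using a b E by auto
    have "(pm A i j' * E) $$ (a,b) = (\<Sum>l = 0..<j'. pm A i j' $$ (a,l) * E $$ (l,b))"
      using a' b' E by (simp add: scalar_prod_def)
    also have "\<dots> = (\<Sum>l = 0..<j'. if b = l then A $$ (a,l) else 0)"
      using a' b' assms by (intro sum.cong) (auto simp: E_def)
    also have "\<dots> = A $$ (a,b)" using b' assms by (simp add: sum.delta)
    finally show "pm A i j $$ (a,b) = (pm A i j' * E) $$ (a,b)" using a' b' by simp
  qed (use E in auto)
  then show ?thesis using vec_space.rank_mult_left_le[of "pm A i j'" i j' E j] E by simp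
qed

abbreviation cr :: "'a::field mat \<Rightarrow> nat \<Rightarrow> nat \<Rightarrow> nat" where
  "cr A i j \<equiv> vec_space.rank i (pm A i j)"

lemma cr_transpose:
  fixes A :: "'a::field mat"
  assumes "i \<le> dim_row A" "j \<le> dim_col A"
  shows "cr A i j = cr (transpose_mat A) j i"
proof -
  have "cr A i j = vec_space.rank j (transpose_mat (pm A i j))"
    using rank_transpose[of "pm A i j" i j] by simp
  also have "\<dots> = cr (transpose_mat A) j i" using pm_transpose[OF assms] by simp
  finally show ?thesis .
qed

lemma cr_row_mono:
  fixes A :: "'a::field mat"
  assumes "i \<le> i'" "i' \<le> dim_row A" "j \<le> dim_col A"
  shows "cr A i j \<le> cr A i' j"
proof -
  have "cr A i j = cr (transpose_mat A) j i" by (rule cr_transpose) (use assms in auto)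
  also have "\<dots> \<le> cr (transpose_mat A) j i'" using pm_col_mono assms(1) by blast
  also have "\<dots> = cr A i' j" using cr_transpose[of i' A j] assms by simp
  finally show ?thesis .
qed

lemma cr_col_succ:
  fixes A :: "'a::field mat"
  shows "cr A i (Suc j) \<le> cr A i j + 1"
proof -
  let ?B = "pm A i (Suc j)" and ?A = "pm A i j"
  let ?v = "col ?B j"
  have sub: "set (cols ?B) \<subseteq> insert ?v (set (cols ?A))"
  proof
    fix x assume "x \<in> set (cols ?B)"
    then have "x \<in> col ?B ` {0..<dim_col ?B}" unfolding cols_def set_map set_upt .
    then obtain b where b: "b < Suc j" "x = col ?B b" by auto
    show "x \<in> insert ?v (set (cols ?A))"
    proof (cases "b = j")
      case True then show ?thesis using b by simp
    next
      case False
      then have bj: "b < j" using b by simp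
      have "col ?B b = col ?A b" using bj by (intro eq_vecI) auto
      moreover have "col ?A b \<in> set (cols ?A)" using bj by (simp add: cols_def)
      ultimately show ?thesis using b by simp
    qed
  qed
  have v: "?v \<in> carrier_vec i" by (rule carrier_vecI) simp
  show ?thesis by (rule vec_space.rank_insert_le[OF pm_carrier(1) pm_carrier(1) v sub])
qed

lemma cr_row_succ:
  fixes A :: "'a::field mat"
  assumes "Suc i \<le> dim_row A" "j \<le> dim_col A"
  shows "cr A (Suc i) j \<le> cr A i j + 1"
proof -
  have "cr A (Suc i) j = cr (transpose_mat A) j (Suc i)" by (rule cr_transpose) (use assms in auto)
  also have "\<dots> \<le> cr (transpose_mat A) j i + 1" by (rule cr_col_succ)
  also have "cr (transpose_mat A) j i = cr A i j" using cr_transpose[of i A j] assms by simp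
  finally show ?thesis .
qed

lemma cr_zero_row: "cr (A::'a::field mat) 0 j = 0"
proof -
  have "cr A 0 j = vec_space.rank j (transpose_mat (pm A 0 j))"
    using rank_transpose[of "pm A 0 j" 0 j] by simp
  also have "\<dots> \<le> 0" using vec_space.rank_le_nc[of "transpose_mat (pm A 0 j)" j 0] by simp
  finally show ?thesis by simp
qed

lemma cr_zero_col: "cr (A::'a::field mat) i 0 = 0"
  using vec_space.rank_le_nc[of "pm A i 0" i 0] by simp

lemma cr_uminus: "cr (- (A::'a::field mat)) i j = cr A i j"
  if "i \<le> dim_row A" "j \<le> dim_col A"
proof -
  have "pm (- A) i j = - pm A i j" using that by (intro eq_matI) auto
  then show ?thesis using rank_uminus[of "pm A i j" i j] by simp
qed

lemma col_pm: "b < j \<Longrightarrow> col (pm A i j) b = vec i (\<lambda>a. A $$ (a,b))"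
  by (intro eq_vecI) auto

lemma set_cols_pm: "set (cols (pm A i j)) = (\<lambda>b. vec i (\<lambda>a. A $$ (a,b))) ` {0..<j}"
proof -
  have "set (cols (pm A i j)) = col (pm A i j) ` {0..<j}" unfolding cols_def set_map set_upt by simp
  also have "\<dots> = (\<lambda>b. vec i (\<lambda>a. A $$ (a,b))) ` {0..<j}" using col_pm by (intro image_cong) auto
  finally show ?thesis .
qed

lemma set_cols_pm_mono: "j \<le> j' \<Longrightarrow> set (cols (pm A i j)) \<subseteq> set (cols (pm A i j'))"
  unfolding set_cols_pm by auto

lemma set_cols_pm_Suc: "set (cols (pm A i (Suc j))) = insert (vec i (\<lambda>a. A $$ (a,j))) (set (cols (pm A i j)))"
proof -
  have "{0..<Suc j} = insert j {0..<j}" by auto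
  then show ?thesis unfolding set_cols_pm by (simp only: image_insert)
qed

lemma mv_pm: "a < i \<Longrightarrow> dim_vec x = j \<Longrightarrow> (pm A i j *\<^sub>v x) $ a = (\<Sum>b = 0..<j. A $$ (a,b) * x $ b)"
  by (simp add: scalar_prod_def)

lemma mult_unit_vec_col:
  fixes A :: "'a::semiring_1 mat"
  assumes "A \<in> carrier_mat m k" "b < k"
  shows "A *\<^sub>v unit_vec k b = col A b"
  using assms by (intro eq_vecI) auto

lemma skew_quad_zero:
  fixes M :: "complex mat"
  assumes sk: "\<And>a b. a < q \<Longrightarrow> b < q \<Longrightarrow> M $$ (b,a) = - M $$ (a,b)"
  shows "(\<Sum>b = 0..<q. (\<Sum>c = 0..<q. M $$ (b,c) * x $ c) * x $ b) = 0"
proof -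
  define S where "S = (\<Sum>b = 0..<q. (\<Sum>c = 0..<q. M $$ (b,c) * x $ c) * x $ b)"
  have e: "M $$ (b,c) * x $ c * x $ b = - (M $$ (c,b) * x $ b * x $ c)" if "b < q" "c < q" for b c
  proof -
    have "M $$ (b,c) = - M $$ (c,b)" using sk[OF that(2) that(1)] .
    then show ?thesis by (simp add: mult_ac)
  qed
  have "S = (\<Sum>b = 0..<q. \<Sum>c = 0..<q. M $$ (b,c) * x $ c * x $ b)"
    unfolding S_def by (simp add: sum_distrib_right)
  also have "\<dots> = (\<Sum>c = 0..<q. \<Sum>b = 0..<q. M $$ (b,c) * x $ c * x $ b)" by (rule sum.swap)
  also have "(\<Sum>c = 0..<q. \<Sum>b = 0..<q. M $$ (b,c) * x $ c * x $ b) = (\<Sum>c = 0..<q. \<Sum>b = 0..<q. - (M $$ (c,b) * x $ b * x $ c))"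
    by (intro sum.cong refl e) auto
  also have "\<dots> = - (\<Sum>c = 0..<q. \<Sum>b = 0..<q. M $$ (c,b) * x $ b * x $ c)"
    by (simp add: sum_negf)
  also have "\<dots> = - S"
    unfolding S_def by (simp add: sum_distrib_right)
  finally have "S = - S" .
  then have "S = 0" by simp
  then show ?thesis unfolding S_def .
qed

context vec_space begin
lemma rank_mono_mv:
  assumes A: "A \<in> carrier_mat n k" and B: "B \<in> carrier_mat n l"
    and H: "\<And>c. c \<in> set (cols A) \<Longrightarrow> \<exists>x\<in>carrier_vec l. B *\<^sub>v x = c"
  shows "rank A \<le> rank B"
proof (rule rank_mono_span[OF A B], rule subsetI)
  fix c assume c: "c \<in> set (cols A)"
  have "c \<in> carrier_vec n" using c A cols_dim by blast
  then show "c \<in> span (set (cols B))" using in_span_cols_iff[OF B] H[OF c] by blast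
qed

lemma rank_insert_ge_mv:
  assumes A: "A \<in> carrier_mat n k" and B: "B \<in> carrier_mat n l"
    and sub: "set (cols A) \<subseteq> set (cols B)" and v: "v \<in> set (cols B)"
    and nv: "\<not> (\<exists>x\<in>carrier_vec k. A *\<^sub>v x = v)"
  shows "rank A + 1 \<le> rank B"
proof (rule rank_insert_ge[OF A B sub v])
  have "v \<in> carrier_vec n" using v B cols_dim by blast
  then show "v \<notin> span (set (cols A))" using in_span_cols_iff[OF A] nv by blast
qed
end

lemma skew_cr_even:
  fixes M :: "complex mat"
  assumes M: "M \<in> carrier_mat n n" and sk: "transpose_mat M = - M"
  shows "p \<le> n \<Longrightarrow> even (cr M p p)"
proof (induction p)
  case 0
  have "cr M 0 0 = 0" by (rule cr_zero_row)
  then show ?case by simp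
next
  case (Suc q)
  define p where "p = Suc q"
  have pn: "p \<le> n" and qn: "q < n" using Suc.prems p_def by auto
  have IH: "even (cr M q q)" using Suc.IH qn by simp
  have skM: "M $$ (b,a) = - M $$ (a,b)" if "a < n" "b < n" for a b
  proof -
    have "transpose_mat M $$ (a,b) = (- M) $$ (a,b)" using sk by simp
    then show ?thesis using that M by simp
  qed
  have dr: "dim_row M = n" "dim_col M = n" using M by auto
  have sym1: "cr M p q = cr M q p"
  proof -
    have "cr M p q = cr (transpose_mat M) q p" by (rule cr_transpose) (use pn qn dr in auto)
    also have "\<dots> = cr M q p" unfolding sk by (rule cr_uminus) (use pn qn dr in auto)
    finally show ?thesis .
  qed
  define v where "v = vec q (\<lambda>a. M $$ (a,q))"
  define w where "w = vec p (\<lambda>a. M $$ (a,q))"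
  have vC: "v \<in> carrier_vec q" unfolding v_def by simp
  have wC: "w \<in> carrier_vec p" unfolding w_def by simp
  have colsQ: "set (cols (pm M q p)) = insert v (set (cols (pm M q q)))"
    unfolding p_def v_def by (rule set_cols_pm_Suc)
  have colsMp: "set (cols (pm M p p)) = insert w (set (cols (pm M p q)))"
    unfolding w_def by (subst (1) p_def, rule set_cols_pm_Suc)
  have rowmono: "cr M q q \<le> cr M p q" by (rule cr_row_mono) (use pn qn dr p_def in auto)
  have colmono: "cr M p q \<le> cr M p p" by (rule pm_col_mono) (simp add: p_def)
  show ?case
  proof (cases "\<exists>x\<in>carrier_vec q. pm M q q *\<^sub>v x = v")
    case True
    then obtain x where x: "x \<in> carrier_vec q" "pm M q q *\<^sub>v x = v" by blast
    have dx: "dim_vec x = q" using x by simp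
    have vx: "v $ a = (\<Sum>b = 0..<q. M $$ (a,b) * x $ b)" if "a < q" for a
      using x(2)[symmetric] mv_pm[OF that dx] by simp
    have Nx: "pm M p q *\<^sub>v x = w"
    proof (rule eq_vecI)
      show "dim_vec (pm M p q *\<^sub>v x) = dim_vec w" unfolding w_def by simp
      fix a assume "a < dim_vec w"
      then have a: "a < p" unfolding w_def by simp
      have e: "(pm M p q *\<^sub>v x) $ a = (\<Sum>b = 0..<q. M $$ (a,b) * x $ b)" by (rule mv_pm[OF a dx])
      show "(pm M p q *\<^sub>v x) $ a = w $ a"
      proof (cases "a < q")
        case True
        then show ?thesis using e vx[OF True] a unfolding v_def w_def by simp
      next
        case False
        then have aq: "a = q" using a p_def by simp
        have e2: "M $$ (q,b) * x $ b = - (v $ b * x $ b)" if "b < q" for b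
        proof -
          have "M $$ (q,b) = - M $$ (b,q)" by (rule skM) (use that qn in auto)
          then show ?thesis using that unfolding v_def by simp
        qed
        have "(\<Sum>b = 0..<q. M $$ (q,b) * x $ b) = (\<Sum>b = 0..<q. - (v $ b * x $ b))"
          by (intro sum.cong refl) (simp add: e2)
        also have "\<dots> = - (\<Sum>b = 0..<q. (\<Sum>c = 0..<q. M $$ (b,c) * x $ c) * x $ b)"
          by (simp add: sum_negf vx)
        also have "\<dots> = 0"
        proof -
          have "(\<Sum>b = 0..<q. (\<Sum>c = 0..<q. M $$ (b,c) * x $ c) * x $ b) = 0"
          proof (rule skew_quad_zero)
            fix a b assume "a < q" "b < q"
            then show "M $$ (b,a) = - M $$ (a,b)" using qn by (intro skM) auto
          qed
          then show ?thesis by simp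
        qed
        finally have "(pm M p q *\<^sub>v x) $ a = 0" using e aq by simp
        moreover have "w $ a = 0"
        proof -
          have "M $$ (q,q) = - M $$ (q,q)" by (rule skM) (use qn in auto)
          then have "M $$ (q,q) = 0" by simp
          then show ?thesis using aq a unfolding w_def by simp
        qed
        ultimately show ?thesis by simp
      qed
    qed
    have r1: "cr M p p \<le> cr M p q"
    proof (rule vec_space.rank_mono_mv[OF pm_carrier(1) pm_carrier(1)])
      fix c assume c: "c \<in> set (cols (pm M p p))"
      show "\<exists>y\<in>carrier_vec q. pm M p q *\<^sub>v y = c"
      proof (cases "c = w")
        case True then show ?thesis using Nx x(1) by blast
      next
        case False
        then have "c \<in> set (cols (pm M p q))" using c colsMp by auto
        then obtain b where b: "b < q" "c = col (pm M p q) b" 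
          unfolding cols_def set_map set_upt by auto
        have "pm M p q *\<^sub>v unit_vec q b = c" using b mult_unit_vec_col[OF pm_carrier(1)] by simp
        then show ?thesis by (intro bexI[of _ "unit_vec q b"]) auto
      qed
    qed
    have r2: "cr M q p \<le> cr M q q"
    proof (rule vec_space.rank_mono_mv[OF pm_carrier(1) pm_carrier(1)])
      fix c assume c: "c \<in> set (cols (pm M q p))"
      show "\<exists>y\<in>carrier_vec q. pm M q q *\<^sub>v y = c"
      proof (cases "c = v")
        case True then show ?thesis using x by blast
      next
        case False
        then have "c \<in> set (cols (pm M q q))" using c colsQ by auto
        then obtain b where b: "b < q" "c = col (pm M q q) b" 
          unfolding cols_def set_map set_upt by auto
        have "pm M q q *\<^sub>v unit_vec q b = c" using b mult_unit_vec_col[OF pm_carrier(1)] by simp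
        then show ?thesis by (intro bexI[of _ "unit_vec q b"]) auto
      qed
    qed
    have "cr M p p = cr M q q" using r1 r2 sym1 rowmono colmono by simp
    then show ?thesis using IH p_def by simp
  next
    case False
    have r1: "cr M q q + 1 \<le> cr M q p"
      by (rule vec_space.rank_insert_ge_mv[of "pm M q q" q q "pm M q p" p v]) (use colsQ False in auto)
    have r1': "cr M q p \<le> cr M q q + 1" using cr_col_succ[where A=M and i=q and j=q] p_def by simp
    have nw: "\<not> (\<exists>y\<in>carrier_vec q. pm M p q *\<^sub>v y = w)"
    proof
      assume "\<exists>y\<in>carrier_vec q. pm M p q *\<^sub>v y = w"
      then obtain y where y: "y \<in> carrier_vec q" "pm M p q *\<^sub>v y = w" by blast
      have dy: "dim_vec y = q" using y by simp
      have "pm M q q *\<^sub>v y = v"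
      proof (rule eq_vecI)
        show "dim_vec (pm M q q *\<^sub>v y) = dim_vec v" unfolding v_def by simp
        fix a assume "a < dim_vec v"
        then have a: "a < q" unfolding v_def by simp
        have ap: "a < p" using a p_def by simp
        have "(pm M q q *\<^sub>v y) $ a = (\<Sum>b = 0..<q. M $$ (a,b) * y $ b)" by (rule mv_pm[OF a dy])
        also have "\<dots> = (pm M p q *\<^sub>v y) $ a" by (rule mv_pm[OF ap dy, symmetric])
        also have "\<dots> = w $ a" using y by simp
        also have "\<dots> = v $ a" using a ap unfolding v_def w_def by simp
        finally show "(pm M q q *\<^sub>v y) $ a = v $ a" .
      qed
      then show False using False y(1) by blast
    qed
    have r2: "cr M p q + 1 \<le> cr M p p"
      by (rule vec_space.rank_insert_ge_mv[of "pm M p q" p q "pm M p p" p w]) (use colsMp nw in auto)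
    have r2': "cr M p p \<le> cr M p q + 1" using cr_col_succ[where A=M and i=p and j=q] p_def by simp
    have "cr M p p = cr M q q + 2" using r1 r1' r2 r2' sym1 by simp
    then show ?thesis using IH p_def by simp
  qed
qed

lemma inv_props:
  assumes "z \<in> involutions n"
  shows "\<And>k. z (z k) = k" "\<And>k. k \<in> {1..n} \<Longrightarrow> z k \<in> {1..n}" "\<And>k. k \<notin> {1..n} \<Longrightarrow> z k = k"
proof -
  have p: "z permutes {1..n}" and ii: "\<forall>i. z (z i) = i" using assms unfolding involutions_def by auto
  show "\<And>k. z (z k) = k" using ii by simp
  show "\<And>k. k \<in> {1..n} \<Longrightarrow> z k \<in> {1..n}" using permutes_in_image[OF p] by blast
  show "\<And>k. k \<notin> {1..n} \<Longrightarrow> z k = k" using permutes_not_in[OF p] by blast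
qed

context vec_space begin
lemma rank_perm_pm:
  assumes z: "z \<in> involutions N" and nN: "n \<le> N" and jN: "j \<le> N"
  shows "rank (pm (mat N N (\<lambda>(a,b). if z (a+1) = b+1 then 1 else 0) :: 'a mat) n j) = card {k \<in> {1..n}. z k \<le> j}"
proof -
  note zi = inv_props[OF z]
  define P where "P = pm (mat N N (\<lambda>(a,b). if z (a+1) = b+1 then 1 else 0) :: 'a mat) n j"
  define K where "K = {k \<in> {1..n}. z k \<le> j}"
  define U where "U = (\<lambda>k. unit_vec n (k - 1) :: 'a vec) ` K"
  have P: "P \<in> carrier_mat n j" unfolding P_def by simp
  have fK: "finite K" unfolding K_def by simp
  have fU: "finite U" unfolding U_def using fK by simp
  have injU: "inj_on (\<lambda>k. unit_vec n (k - 1) :: 'a vec) K"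
  proof (rule inj_onI)
    fix x y assume x: "x \<in> K" and y: "y \<in> K" and e: "unit_vec n (x - 1) = (unit_vec n (y - 1) :: 'a vec)"
    have "x - 1 < n" "y - 1 < n" "x \<ge> 1" "y \<ge> 1" using x y unfolding K_def by auto
    then show "x = y" using e unit_vec_eq by fastforce
  qed
  have cardU: "card U = card K" unfolding U_def using card_image[OF injU] .
  have colP: "col P b = vec n (\<lambda>a. if z (a+1) = b+1 then 1 else 0)" if b: "b < j" for b
    unfolding P_def using b nN jN by (intro eq_vecI) auto
  have UC: "U \<subseteq> carrier_vec n" unfolding U_def by auto
  have "set (cols P) \<subseteq> span U"
  proof
    fix c assume "c \<in> set (cols P)"
    then obtain b where b: "b < j" "c = col P b" using P unfolding cols_def set_map set_upt by auto
    show "c \<in> span U"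
    proof (cases "z (b+1) \<le> n")
      case True
      have b1: "b + 1 \<in> {1..N}" using b jN by auto
      then have zb: "z (b+1) \<in> {1..N}" using zi(2) by blast
      have iff: "(z (a+1) = b+1) = (a = z (b+1) - 1)" for a
      proof -
        have "(z (a+1) = b+1) = (a+1 = z (b+1))" by (metis zi(1))
        then show ?thesis using zb by auto
      qed
      have lt: "z (b+1) - 1 < n" using True zb by auto
      have "c = unit_vec n (z (b+1) - 1)"
        unfolding b(2) colP[OF b(1)]
      proof (rule eq_vecI)
        fix a assume "a < dim_vec (unit_vec n (z (b+1) - 1) :: 'a vec)"
        then have a: "a < n" by simp
        show "vec n (\<lambda>a. if z (a + 1) = b + 1 then 1 else 0) $ a = unit_vec n (z (b+1) - 1) $ a"
          using a lt iff[of a] by simp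
      qed simp
      moreover have "z (b+1) \<in> K" unfolding K_def using True zb zi(1)[of "b+1"] b by auto
      ultimately have "c \<in> U" unfolding U_def by blast
      then show ?thesis using in_own_span[OF UC] by blast
    next
      case False
      have "c = 0\<^sub>v n"
        unfolding b(2) colP[OF b(1)]
      proof (intro eq_vecI)
        fix a assume "a < dim_vec (0\<^sub>v n :: 'a vec)"
        then have a: "a < n" by simp
        have "z (a+1) \<noteq> b+1"
        proof
          assume "z (a+1) = b+1"
          then have "z (b+1) = a + 1" using zi(1)[of "a+1"] by simp
          then show False using False a by simp
        qed
        then show "vec n (\<lambda>a. if z (a + 1) = b + 1 then 1 else 0) $ a = 0\<^sub>v n $ a" using a by simp
      qed simp
      note c0 = this
      have l0: "0\<^sub>v n = lincomb (\<lambda>_. 0) {}" by simp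
      have "c = lincomb (\<lambda>_. 0) {}" using c0 l0 by (rule trans)
      then show ?thesis by (rule in_spanI) auto
    qed
  qed
  then have le: "rank P \<le> card U" using rank_le_card_gen[OF P fU UC] by simp
  have Usub: "U \<subseteq> set (cols P)"
  proof
    fix u assume "u \<in> U"
    then obtain k where k: "k \<in> K" "u = unit_vec n (k - 1)" unfolding U_def by blast
    have kN: "k \<in> {1..N}" using k(1) nN unfolding K_def by auto
    have zk: "z k \<in> {1..N}" using zi(2)[OF kN] .
    define b where "b = z k - 1"
    have b: "b < j" "b + 1 = z k" using k(1) zk unfolding K_def b_def by auto
    have "col P b = unit_vec n (k - 1)"
      unfolding colP[OF b(1)] b(2)
    proof (intro eq_vecI)
      fix a assume "a < dim_vec (unit_vec n (k - 1) :: 'a vec)"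
      then have a: "a < n" by simp
      have "(z (a+1) = z k) = (a + 1 = k)"
        by (metis zi(1))
      then show "vec n (\<lambda>a. if z (a + 1) = z k then 1 else 0) $ a = unit_vec n (k - 1) $ a"
        using a kN by (auto simp: unit_vec_def)
    qed simp
    moreover have "col P b \<in> set (cols P)" using b P by (simp add: cols_def)
    ultimately show "u \<in> set (cols P)" using k by simp
  qed
  have liU: "lin_indpt U"
  proof -
    have "U \<subseteq> set (unit_vecs n)" unfolding U_def K_def unit_vecs_def
    proof
      fix u assume "u \<in> (\<lambda>k. unit_vec n (k - 1) :: 'a vec) ` {k \<in> {1..n}. z k \<le> j}"
      then obtain k where "k \<in> {1..n}" "u = unit_vec n (k - 1)" by blast
      then show "u \<in> set (map (unit_vec n) [0..<n])" by auto
    qed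
    moreover have "lin_indpt (set (unit_vecs n))" using unit_vecs_basis unfolding basis_def by blast
    ultimately show ?thesis using subset_li_is_li by blast
  qed
  have ge: "card U \<le> rank P"
    using card_le_rank[OF P fU _ liU] Usub in_own_span[of "set (cols P)"] P cols_dim by blast
  show ?thesis using le ge cardU unfolding P_def K_def by simp
qed
end

lemma cr_perm:
  assumes z: "z \<in> involutions N" and nN: "n \<le> N" and jN: "j \<le> N"
  shows "cr (perm_mat N z) n j = card {k \<in> {1..n}. z k \<le> j}"
  unfolding perm_mat_def using vec_space.rank_perm_pm[OF assms] .

definition cnt :: "(nat \<Rightarrow> nat) \<Rightarrow> nat \<Rightarrow> nat \<Rightarrow> nat" where
  "cnt z i j = card {k \<in> {1..i}. z k \<le> j}"

lemma cnt_C1: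
  assumes "1 \<le> i" "z i \<le> j"
  shows "cnt z i j = cnt z (i-1) j + 1"
proof -
  have "{k \<in> {1..i}. z k \<le> j} = insert i {k \<in> {1..i-1}. z k \<le> j}" using assms by auto
  moreover have "i \<notin> {k \<in> {1..i-1}. z k \<le> j}" by auto
  moreover have "finite {k \<in> {1..i-1}. z k \<le> j}" by simp
  ultimately show ?thesis unfolding cnt_def by simp
qed

lemma cnt_C2:
  assumes z: "z \<in> involutions n" and j: "1 \<le> j" "j \<le> n" and zj: "z j \<le> i"
  shows "cnt z i j = cnt z i (j-1) + 1"
proof -
  note zi = inv_props[OF z]
  have zj1: "z j \<in> {1..n}" using zi(2) j by auto
  have "{k \<in> {1..i}. z k \<le> j} = insert (z j) {k \<in> {1..i}. z k \<le> j - 1}"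
  proof (rule equalityI; rule subsetI)
    fix k assume k: "k \<in> {k \<in> {1..i}. z k \<le> j}"
    show "k \<in> insert (z j) {k \<in> {1..i}. z k \<le> j - 1}"
    proof (cases "z k = j")
      case True then have "k = z j" using zi(1)[of k] by simp
      then show ?thesis by simp
    next
      case False then show ?thesis using k by auto
    qed
  next
    fix k assume "k \<in> insert (z j) {k \<in> {1..i}. z k \<le> j - 1}"
    then show "k \<in> {k \<in> {1..i}. z k \<le> j}" using zj1 zj zi(1)[of j] by auto
  qed
  moreover have "z j \<notin> {k \<in> {1..i}. z k \<le> j - 1}" using zi(1)[of j] j by auto
  ultimately show ?thesis unfolding cnt_def by simp
qed

lemma cnt_C3:
  assumes z: "z \<in> involutions n" and h: "i < z (Suc j)"
  shows "cnt z i (Suc j) = cnt z i j"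
proof -
  note zi = inv_props[OF z]
  have "{k \<in> {1..i}. z k \<le> Suc j} = {k \<in> {1..i}. z k \<le> j}"
  proof (rule equalityI; rule subsetI)
    fix k assume k: "k \<in> {k \<in> {1..i}. z k \<le> Suc j}"
    have "z k \<noteq> Suc j"
    proof
      assume "z k = Suc j"
      then have "k = z (Suc j)" using zi(1)[of k] by simp
      then show False using k h by auto
    qed
    then show "k \<in> {k \<in> {1..i}. z k \<le> j}" using k by auto
  qed auto
  then show ?thesis unfolding cnt_def by simp
qed

lemma cnt_C4:
  assumes h: "j < z (Suc i)"
  shows "cnt z (Suc i) j = cnt z i j"
proof -
  have "{k \<in> {1..Suc i}. z k \<le> j} = {k \<in> {1..i}. z k \<le> j}" using h by (auto simp: le_Suc_eq)
  then show ?thesis unfolding cnt_def by simp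
qed

lemma cnt_sym:
  assumes z: "z \<in> involutions n" and i: "i \<le> n" and j: "j \<le> n"
  shows "cnt z i j = cnt z j i"
proof -
  note zi = inv_props[OF z]
  have inj: "inj z" by (metis injI zi(1))
  have "z ` {k \<in> {1..i}. z k \<le> j} = {k \<in> {1..j}. z k \<le> i}"
  proof (rule equalityI; rule subsetI)
    fix x assume "x \<in> z ` {k \<in> {1..i}. z k \<le> j}"
    then obtain k where k: "k \<in> {1..i}" "z k \<le> j" "x = z k" by blast
    have "z k \<in> {1..n}" using zi(2) k i by auto
    then show "x \<in> {k \<in> {1..j}. z k \<le> i}" using k zi(1)[of k] by auto
  next
    fix x assume x: "x \<in> {k \<in> {1..j}. z k \<le> i}"
    have "z x \<in> {1..n}" using zi(2) x j by auto
    then have "z x \<in> {k \<in> {1..i}. z k \<le> j}" using x zi(1)[of x] by auto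
    then show "x \<in> z ` {k \<in> {1..i}. z k \<le> j}" using zi(1)[of x] by (metis image_eqI)
  qed
  then show ?thesis unfolding cnt_def using card_image[OF inj_on_subset[OF inj subset_UNIV]] by metis
qed

lemma cnt_even:
  assumes z: "z \<in> fpf_involutions n" and i: "i \<le> n"
  shows "even (cnt z i i)"
proof -
  have zinv: "z \<in> involutions n" and fp: "\<forall>k\<in>{1..n}. z k \<noteq> k" using z unfolding fpf_involutions_def by auto
  note zi = inv_props[OF zinv]
  define S where "S = {k \<in> {1..i}. z k \<le> i}"
  define L where "L = {k \<in> S. k < z k}"
  define G where "G = {k \<in> S. z k < k}"
  have fS: "finite S" unfolding S_def by simp
  have SLG: "S = L \<union> G"
  proof -
    have "z k \<noteq> k" if "k \<in> S" for k using fp that i unfolding S_def by auto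
    then show ?thesis unfolding L_def G_def by fastforce
  qed
  have disj: "L \<inter> G = {}" unfolding L_def G_def by auto
  have inj: "inj z" by (metis injI zi(1))
  have zS: "z k \<in> S" if "k \<in> S" for k
  proof -
    have "z k \<in> {1..n}" using zi(2) that i unfolding S_def by auto
    then show ?thesis using that zi(1)[of k] unfolding S_def by auto
  qed
  have "z ` L = G"
  proof (rule equalityI; rule subsetI)
    fix x assume "x \<in> z ` L"
    then obtain k where "k \<in> L" "x = z k" by blast
    then show "x \<in> G" using zS zi(1)[of k] unfolding L_def G_def by auto
  next
    fix x assume x: "x \<in> G"
    then have "z x \<in> L" using zS zi(1)[of x] unfolding L_def G_def by auto
    then show "x \<in> z ` L" using zi(1)[of x] by (metis image_eqI)
  qed
  then have "card G = card L" using card_image[OF inj_on_subset[OF inj subset_UNIV]] by metis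
  moreover have "card S = card L + card G"
    using SLG disj fS by (simp add: card_Un_disjoint)
  ultimately have "card S = 2 * card L" by simp
  then show ?thesis unfolding cnt_def S_def[symmetric] by simp
qed

lemma ul_sub_pm:
  assumes "i \<le> dim_row A" "j \<le> dim_col A"
  shows "ul_sub A i j = pm A i j"
proof -
  have r: "{a. a < dim_row A \<and> a \<in> {0..<i}} = {0..<i}" using assms by auto
  have c: "{a. a < dim_col A \<and> a \<in> {0..<j}} = {0..<j}" using assms by auto
  have pk: "pick {0..<m} a = a" if "a < m" for a m
  proof -
    have "{x \<in> {0..<m}. x < a} = {0..<a}" using that by auto
    then have "card {x \<in> {0..<m}. x < a} = a" by simp
    then show ?thesis using pick_card_in_set[of a "{0..<m}"] that by simp
  qed
  show ?thesis unfolding ul_sub_def submatrix_def r c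
    by (intro eq_matI) (auto simp: pk)
qed

lemma crank_ul_sub:
  assumes "i \<le> dim_row A" "j \<le> dim_col A"
  shows "crank (ul_sub A i j) = cr A i j"
  unfolding crank_def ul_sub_pm[OF assms] by simp

lemma crank_ul_sub_perm:
  assumes z: "z \<in> involutions n" and "i \<le> n" "j \<le> n"
  shows "crank (ul_sub (perm_mat n z) i j) = cnt z i j"
proof -
  have "dim_row (perm_mat n z) = n" "dim_col (perm_mat n z) = n" unfolding perm_mat_def by auto
  then have "crank (ul_sub (perm_mat n z) i j) = cr (perm_mat n z) i j"
    using crank_ul_sub assms by simp
  also have "\<dots> = cnt z i j" unfolding cnt_def using cr_perm[OF z] assms by simp
  finally show ?thesis .
qed

lemma D_O_iff:
  assumes z: "z \<in> involutions n"
  shows "(i,c) \<in> D_O n z \<longleftrightarrow> i \<in> {1..n} \<and> c \<in> {1..n} \<and> c < z i \<and> c \<le> i \<and> i < z c"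
proof
  note zi = inv_props[OF z]
  assume "(i,c) \<in> D_O n z"
  then obtain j where j: "j \<in> {1..n}" "i \<in> {1..n}" "c = z j" "z i > z j" "z j \<le> i" "i < j"
    unfolding D_O_def by blast
  then show "i \<in> {1..n} \<and> c \<in> {1..n} \<and> c < z i \<and> c \<le> i \<and> i < z c"
    using zi(1)[of j] zi(2)[of j] by auto
next
  note zi = inv_props[OF z]
  assume R: "i \<in> {1..n} \<and> c \<in> {1..n} \<and> c < z i \<and> c \<le> i \<and> i < z c"
  have zc: "z c \<in> {1..n}" using zi(2) R by auto
  have zzc: "z (z c) = c" by (rule zi(1))
  show "(i,c) \<in> D_O n z" unfolding D_O_def
    using R zc zzc by (intro CollectI exI[of _ i] exI[of _ "z c"]) auto
qed

lemma D_Sp_iff: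
  assumes z: "z \<in> involutions n"
  shows "(i,c) \<in> D_Sp n z \<longleftrightarrow> i \<in> {1..n} \<and> c \<in> {1..n} \<and> c < z i \<and> c < i \<and> i < z c"
proof
  note zi = inv_props[OF z]
  assume "(i,c) \<in> D_Sp n z"
  then obtain j where j: "j \<in> {1..n}" "i \<in> {1..n}" "c = z j" "z i > z j" "z j < i" "i < j"
    unfolding D_Sp_def by blast
  then show "i \<in> {1..n} \<and> c \<in> {1..n} \<and> c < z i \<and> c < i \<and> i < z c"
    using zi(1)[of j] zi(2)[of j] by auto
next
  note zi = inv_props[OF z]
  assume R: "i \<in> {1..n} \<and> c \<in> {1..n} \<and> c < z i \<and> c < i \<and> i < z c"
  have zc: "z c \<in> {1..n}" using zi(2) R by auto
  have zzc: "z (z c) = c" by (rule zi(1))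
  show "(i,c) \<in> D_Sp n z" unfolding D_Sp_def
    using R zc zzc by (intro CollectI exI[of _ i] exI[of _ "z c"]) auto
qed

lemma step1:
  fixes A :: "complex mat"
  assumes A: "A \<in> carrier_mat n n" and z: "z \<in> involutions n"
    and D': "\<And>i c. (i,c) \<in> D' \<Longrightarrow> i \<in> {1..n} \<and> c \<in> {1..n} \<and> c < z i \<and> i < z c"
    and H: "\<And>i c. (i,c) \<in> Ess D' \<Longrightarrow> cr A i c \<le> cnt z i c"
  shows "(i,c) \<in> D' \<Longrightarrow> cr A i c \<le> cnt z i c"
proof (induction "2*n - (i + c)" arbitrary: i c rule: less_induct)
  case less
  have ic: "i \<in> {1..n}" "c \<in> {1..n}" using D'[OF less.prems] by auto
  show ?case
  proof (cases "(i,c) \<in> Ess D'")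
    case True then show ?thesis using H by blast
  next
    case False
    then have "(i, c+1) \<in> D' \<or> (i+1, c) \<in> D'" using less.prems unfolding Ess_def by blast
    then show ?thesis
    proof
      assume d: "(i, c+1) \<in> D'"
      have b: "c + 1 \<le> n" "i < z (Suc c)" using D'[OF d] by auto
      have "cr A i (c+1) \<le> cnt z i (c+1)" by (rule less.hyps[OF _ d]) (use b ic in auto)
      moreover have "cnt z i (Suc c) = cnt z i c" by (rule cnt_C3[OF z b(2)])
      moreover have "cr A i c \<le> cr A i (c+1)" by (rule pm_col_mono) simp
      ultimately show ?thesis by simp
    next
      assume d: "(i+1, c) \<in> D'"
      have b: "i + 1 \<le> n" "c < z (Suc i)" using D'[OF d] by auto
      have "cr A (i+1) c \<le> cnt z (i+1) c" by (rule less.hyps[OF _ d]) (use b ic in auto)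
      moreover have "cnt z (Suc i) c = cnt z i c" by (rule cnt_C4[where z=z and i=i and j=c, OF b(2)])
      moreover have "cr A i c \<le> cr A (i+1) c" by (rule cr_row_mono) (use A b ic in auto)
      ultimately show ?thesis by simp
    qed
  qed
qed

lemma main_gen:
  fixes A :: "complex mat"
  assumes A: "A \<in> carrier_mat n n" and z: "z \<in> involutions n"
    and symA: "\<And>i c. i \<le> n \<Longrightarrow> c \<le> n \<Longrightarrow> cr A i c = cr A c i"
    and HL: "\<And>i c. i \<in> {1..n} \<Longrightarrow> c \<in> {1..n} \<Longrightarrow> c < z i \<Longrightarrow> i < z c \<Longrightarrow> c < i \<Longrightarrow> cr A i c \<le> cnt z i c"
    and HD: "\<And>i. i \<in> {1..n} \<Longrightarrow> i < z i \<Longrightarrow> cr A i (i-1) \<le> cnt z i (i-1) \<Longrightarrow> cr A i i \<le> cnt z i i"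
  shows "i \<le> n \<Longrightarrow> c \<le> n \<Longrightarrow> cr A i c \<le> cnt z i c"
proof (induction "i + c" arbitrary: i c rule: less_induct)
  case less
  show ?case
  proof (cases "i = 0")
    case True
    have "cr A 0 c = 0" by (rule cr_zero_row)
    then show ?thesis using True by simp
  next
    case i0: False
    show ?thesis
    proof (cases "c = 0")
      case True
      have "cr A i 0 = 0" by (rule cr_zero_col)
      then show ?thesis using True by simp
    next
      case c0: False
      have i1: "1 \<le> i" and c1: "1 \<le> c" using i0 c0 by auto
      have iN: "i \<in> {1..n}" "c \<in> {1..n}" using i1 c1 less.prems by auto
      show ?thesis
      proof (cases "z i \<le> c")
        case True
        have ih: "cr A (i-1) c \<le> cnt z (i-1) c" by (rule less.hyps) (use less.prems i1 in auto)
        have "cr A (Suc (i-1)) c \<le> cr A (i-1) c + 1" by (rule cr_row_succ) (use A less.prems i1 in auto)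
        then have "cr A i c \<le> cr A (i-1) c + 1" using i1 by simp
        moreover have "cnt z i c = cnt z (i-1) c + 1" by (rule cnt_C1[where z=z and i=i and j=c, OF i1 True])
        ultimately show ?thesis using ih by simp
      next
        case F1: False
        show ?thesis
        proof (cases "z c \<le> i")
          case True
          have ih: "cr A i (c-1) \<le> cnt z i (c-1)" by (rule less.hyps) (use less.prems c1 in auto)
          have "cr A i (Suc (c-1)) \<le> cr A i (c-1) + 1" by (rule cr_col_succ)
          then have "cr A i c \<le> cr A i (c-1) + 1" using c1 by simp
          moreover have "cnt z i c = cnt z i (c-1) + 1" by (rule cnt_C2[OF z c1 _ True]) (use less.prems in auto)
          ultimately show ?thesis using ih by simp
        next
          case F2: False
          have lt: "c < z i" "i < z c" using F1 F2 by auto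
          consider "c < i" | "i < c" | "i = c" by linarith
          then show ?thesis
          proof cases
            case 1 then show ?thesis using HL iN lt by blast
          next
            case 2
            have "cr A c i \<le> cnt z c i" using HL[of c i] iN lt 2 by blast
            then show ?thesis using symA[of i c] cnt_sym[OF z, of i c] less.prems by simp
          next
            case 3
            have ih: "cr A i (i-1) \<le> cnt z i (i-1)" by (rule less.hyps) (use less.prems i1 3 in auto)
            then show ?thesis using HD[of i] iN lt 3 by simp
          qed
        qed
      qed
    qed
  qed
qed

lemma Mat_K_sym:
  assumes "A \<in> Mat_K K n" "i \<le> n" "c \<le> n"
  shows "cr A i c = cr A c i"
proof -
  have A: "A \<in> carrier_mat n n" and t: "transpose_mat A = A \<or> transpose_mat A = - A"
    using assms(1) unfolding Mat_K_def by (auto split: ktype.splits)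
  have "cr A i c = cr (transpose_mat A) c i" by (rule cr_transpose) (use A assms in auto)
  also have "\<dots> = cr A c i"
  proof (cases "transpose_mat A = A")
    case True then show ?thesis by simp
  next
    case False
    then have "transpose_mat A = - A" using t by simp
    then show ?thesis using cr_uminus[of c A i] A assms by simp
  qed
  finally show ?thesis .
qed

theorem proposition2p16:
  shows "(\<forall>K n z. z \<in> involutions n \<longrightarrow>
            MX K n z = {A \<in> Mat_K K n. \<forall>(i,j)\<in>Ess (D_O n z).
               crank (ul_sub A i j) \<le> crank (ul_sub (perm_mat n z) i j)})
       \<and> (\<forall>n z. even n \<longrightarrow> z \<in> fpf_involutions n \<longrightarrow>
            MX KSp n z = {A \<in> Mat_K KSp n. \<forall>(i,j)\<in>Ess (D_Sp n z).
               crank (ul_sub A i j) \<le> crank (ul_sub (perm_mat n z) i j)})"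
proof (intro conjI allI impI)
  fix K n z assume z: "z \<in> involutions n"
  note zi = inv_props[OF z]
  show "MX K n z = {A \<in> Mat_K K n. \<forall>(i,j)\<in>Ess (D_O n z).
               crank (ul_sub A i j) \<le> crank (ul_sub (perm_mat n z) i j)}"
  proof (rule equalityI; rule subsetI)
    fix A assume "A \<in> MX K n z"
    then have AK: "A \<in> Mat_K K n" and H: "\<forall>i\<in>{1..n}. \<forall>j\<in>{1..n}.
       crank (ul_sub A i j) \<le> crank (ul_sub (perm_mat n z) i j)" unfolding MX_def by auto
    have "\<forall>(i,j)\<in>Ess (D_O n z). crank (ul_sub A i j) \<le> crank (ul_sub (perm_mat n z) i j)"
    proof (intro ballI, clarify)
      fix i j assume "(i,j) \<in> Ess (D_O n z)"
      then have "(i,j) \<in> D_O n z" unfolding Ess_def by blast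
      then have "i \<in> {1..n}" "j \<in> {1..n}" using D_O_iff[OF z] by auto
      then show "crank (ul_sub A i j) \<le> crank (ul_sub (perm_mat n z) i j)" using H by blast
    qed
    then show "A \<in> {A \<in> Mat_K K n. \<forall>(i,j)\<in>Ess (D_O n z).
               crank (ul_sub A i j) \<le> crank (ul_sub (perm_mat n z) i j)}" using AK by blast
  next
    fix A assume "A \<in> {A \<in> Mat_K K n. \<forall>(i,j)\<in>Ess (D_O n z).
               crank (ul_sub A i j) \<le> crank (ul_sub (perm_mat n z) i j)}"
    then have AK: "A \<in> Mat_K K n" and H: "\<forall>(i,j)\<in>Ess (D_O n z).
               crank (ul_sub A i j) \<le> crank (ul_sub (perm_mat n z) i j)" by auto
    have A: "A \<in> carrier_mat n n" using AK unfolding Mat_K_def by auto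
    have conv: "crank (ul_sub A i j) = cr A i j" if "i \<le> n" "j \<le> n" for i j
      using crank_ul_sub[of i A j] A that by simp
    have convP: "crank (ul_sub (perm_mat n z) i j) = cnt z i j" if "i \<le> n" "j \<le> n" for i j
      using crank_ul_sub_perm[OF z that] .
    have D': "i \<in> {1..n} \<and> c \<in> {1..n} \<and> c < z i \<and> i < z c" if "(i,c) \<in> D_O n z" for i c
      using D_O_iff[OF z] that by auto
    have H': "cr A i c \<le> cnt z i c" if "(i,c) \<in> Ess (D_O n z)" for i c
    proof -
      have "(i,c) \<in> D_O n z" using that unfolding Ess_def by blast
      then have "i \<le> n" "c \<le> n" using D' by auto
      then show ?thesis using H that conv convP by fastforce
    qed
    have S1: "cr A i c \<le> cnt z i c" if "(i,c) \<in> D_O n z" for i c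
      by (rule step1[OF A z D' H' that]) auto
    have all: "cr A i c \<le> cnt z i c" if "i \<le> n" "c \<le> n" for i c
    proof (rule main_gen[OF A z _ _ _ that])
      show "\<And>i c. i \<le> n \<Longrightarrow> c \<le> n \<Longrightarrow> cr A i c = cr A c i" using Mat_K_sym[OF AK] by blast
      show "\<And>i c. i \<in> {1..n} \<Longrightarrow> c \<in> {1..n} \<Longrightarrow> c < z i \<Longrightarrow> i < z c \<Longrightarrow> c < i \<Longrightarrow> cr A i c \<le> cnt z i c"
        using S1 D_O_iff[OF z] by simp
      show "\<And>i. i \<in> {1..n} \<Longrightarrow> i < z i \<Longrightarrow> cr A i (i-1) \<le> cnt z i (i-1) \<Longrightarrow> cr A i i \<le> cnt z i i"
        using S1 D_O_iff[OF z] by simp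
    qed
    show "A \<in> MX K n z" unfolding MX_def using AK all conv convP by auto
  qed
next
  fix n z assume ev: "even n" and zf: "z \<in> fpf_involutions n"
  have z: "z \<in> involutions n" using zf unfolding fpf_involutions_def by auto
  show "MX KSp n z = {A \<in> Mat_K KSp n. \<forall>(i,j)\<in>Ess (D_Sp n z).
               crank (ul_sub A i j) \<le> crank (ul_sub (perm_mat n z) i j)}"
  proof (rule equalityI; rule subsetI)
    fix A assume "A \<in> MX KSp n z"
    then have AK: "A \<in> Mat_K KSp n" and H: "\<forall>i\<in>{1..n}. \<forall>j\<in>{1..n}.
       crank (ul_sub A i j) \<le> crank (ul_sub (perm_mat n z) i j)" unfolding MX_def by auto
    have "\<forall>(i,j)\<in>Ess (D_Sp n z). crank (ul_sub A i j) \<le> crank (ul_sub (perm_mat n z) i j)"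
    proof (intro ballI, clarify)
      fix i j assume "(i,j) \<in> Ess (D_Sp n z)"
      then have "(i,j) \<in> D_Sp n z" unfolding Ess_def by blast
      then have "i \<in> {1..n}" "j \<in> {1..n}" using D_Sp_iff[OF z] by auto
      then show "crank (ul_sub A i j) \<le> crank (ul_sub (perm_mat n z) i j)" using H by blast
    qed
    then show "A \<in> {A \<in> Mat_K KSp n. \<forall>(i,j)\<in>Ess (D_Sp n z).
               crank (ul_sub A i j) \<le> crank (ul_sub (perm_mat n z) i j)}" using AK by blast
  next
    fix A assume "A \<in> {A \<in> Mat_K KSp n. \<forall>(i,j)\<in>Ess (D_Sp n z).
               crank (ul_sub A i j) \<le> crank (ul_sub (perm_mat n z) i j)}"
    then have AK: "A \<in> Mat_K KSp n" and H: "\<forall>(i,j)\<in>Ess (D_Sp n z).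
               crank (ul_sub A i j) \<le> crank (ul_sub (perm_mat n z) i j)" by auto
    have A: "A \<in> carrier_mat n n" and sk: "transpose_mat A = - A" using AK unfolding Mat_K_def by auto
    have conv: "crank (ul_sub A i j) = cr A i j" if "i \<le> n" "j \<le> n" for i j
      using crank_ul_sub[of i A j] A that by simp
    have convP: "crank (ul_sub (perm_mat n z) i j) = cnt z i j" if "i \<le> n" "j \<le> n" for i j
      using crank_ul_sub_perm[OF z that] .
    have D': "i \<in> {1..n} \<and> c \<in> {1..n} \<and> c < z i \<and> i < z c" if "(i,c) \<in> D_Sp n z" for i c
      using D_Sp_iff[OF z] that by auto
    have H': "cr A i c \<le> cnt z i c" if "(i,c) \<in> Ess (D_Sp n z)" for i c
    proof -
      have "(i,c) \<in> D_Sp n z" using that unfolding Ess_def by blast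
      then have "i \<le> n" "c \<le> n" using D' by auto
      then show ?thesis using H that conv convP by fastforce
    qed
    have S1: "cr A i c \<le> cnt z i c" if "(i,c) \<in> D_Sp n z" for i c
      by (rule step1[OF A z D' H' that]) auto
    have HD: "cr A i i \<le> cnt z i i"
      if i: "i \<in> {1..n}" and lt: "i < z i" and ih: "cr A i (i-1) \<le> cnt z i (i-1)" for i
    proof -
      have i1: "1 \<le> i" using i by simp
      have "cr A i (Suc (i-1)) \<le> cr A i (i-1) + 1" by (rule cr_col_succ)
      then have a: "cr A i i \<le> cr A i (i-1) + 1" using i1 by simp
      have "cnt z i (Suc (i-1)) = cnt z i (i-1)" by (rule cnt_C3[OF z]) (use lt i1 in simp)
      then have b: "cnt z i i = cnt z i (i-1)" using i1 by simp
      have e1: "even (cr A i i)" by (rule skew_cr_even[OF A sk]) (use i in simp)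
      have e2: "even (cnt z i i)" by (rule cnt_even[OF zf]) (use i in simp)
      have "cr A i i \<le> cnt z i i + 1" using a b ih by simp
      then show ?thesis using e1 e2 by (metis Suc_eq_plus1 even_Suc le_SucE)
    qed
    have all: "cr A i c \<le> cnt z i c" if "i \<le> n" "c \<le> n" for i c
    proof (rule main_gen[OF A z _ _ _ that])
      show "\<And>i c. i \<le> n \<Longrightarrow> c \<le> n \<Longrightarrow> cr A i c = cr A c i" using Mat_K_sym[OF AK] by blast
      show "\<And>i c. i \<in> {1..n} \<Longrightarrow> c \<in> {1..n} \<Longrightarrow> c < z i \<Longrightarrow> i < z c \<Longrightarrow> c < i \<Longrightarrow> cr A i c \<le> cnt z i c"
        using S1 D_Sp_iff[OF z] by simp
      show "\<And>i. i \<in> {1..n} \<Longrightarrow> i < z i \<Longrightarrow> cr A i (i-1) \<le> cnt z i (i-1) \<Longrightarrow> cr A i i \<le> cnt z i i"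
        using HD by blast
    qed
    show "A \<in> MX KSp n z" unfolding MX_def using AK all conv convP by auto
  qed
qed

end
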